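(* Let $\rho^a,\rho^b\in\mathbb R^M_{>0}$, $M_a=\{j\in M:\rho^a_j\ge\rho^b_j\}$ and $M_b=\{j\in M:\rho^a_j\le\rho^b_j\}$. Then $${\rm LW}^{{\rm OPT}(M_a,\rho^a)}+{\rm LW}^{{\rm OPT}(M_b,\rho^b)}\ \ge\ \frac12\bigl({\rm LW}^{{\rm OPT}(M,\rho^a)}+{\rm LW}^{{\rm OPT}(M,\rho^b)}\bigr).$$
   Context: Market model. Buyers $N_0=\{1,\dots,n\}$, sellers $M=\{1,\dots,m\}$, bipartite edge set $E\subseteq N_0\times M$; $E_S$ is the set of edges incident to participants in $S$ ($E_i=E_{\{i\}}$); $w(F)=\sum_{e\in F}w_e$. Each seller $j$ has a monotone submodular $f_j:2^{E_j}\to\mathbb R_+$ with $f_j(\emptyset)=0$, polymatroid $P_j=\{y\in\mathbb R^{E_j}_+:y(F)\le f_j(F)\ \forall F\subseteq E_j\}$ ($f_j(E_j)$ = her total amount of a homogeneous divisible good). Buyer $i$ has per-unit valuation $v_i>0$ and budget $B_i\ge0$. For a seller set $M'\subseteq M$ and seller valuations $\sigma\in\mathbb R^{M'}_{>0}$, consider the submarket with sellers $M'$, edges $E'=\{ij\in E:j\in M'\}$ and constraint $P_{M'}=\{w\in\mathbb R^{E'}_+: w|_{E_j}\in P_j\ \forall j\in M'\}$; for $w\in P_{M'}$ its liquid welfare is $\sum_{i\in N_0}\min(v_iw(E_i\cap E'),B_i)+\sum_{j\in M'}\sigma_j(f_j(E_j)-w(E_j))$, and ${\rm LW}^{{\rm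 OPT}(M',\sigma)}$ is the maximum of this over $w\in P_{M'}$. *)

theory Defs
  imports Main "HOL-Library.Extended_Real" Complex_Main
begin

text \<open>Market model. Buyers are 1..n, sellers 1..m, edges are pairs (buyer, seller).
  A seller valuation function f :: seller => edge set => real, w :: edge => real.\<close>

definition edges_at_buyer :: "(nat \<times> nat) set \<Rightarrow> nat \<Rightarrow> (nat \<times> nat) set" where
  "edges_at_buyer E i = {e \<in> E. fst e = i}"

definition edges_at_seller :: "(nat \<times> nat) set \<Rightarrow> nat \<Rightarrow> (nat \<times> nat) set" where
  "edges_at_seller E j = {e \<in> E. snd e = j}"

definition sub_edges :: "(nat \<times> nat) set \<Rightarrow> nat set \<Rightarrow> (nat \<times> nat) set" where
  "sub_edges E M' = {e \<in> E. snd e \<in> M'}"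

definition mono_submod_on :: "'a set \<Rightarrow> ('a set \<Rightarrow> real) \<Rightarrow> bool" where
  "mono_submod_on G g \<longleftrightarrow>
     g {} = 0 \<and>
     (\<forall>F. F \<subseteq> G \<longrightarrow> 0 \<le> g F) \<and>
     (\<forall>F H. F \<subseteq> H \<and> H \<subseteq> G \<longrightarrow> g F \<le> g H) \<and>
     (\<forall>F H. F \<subseteq> G \<and> H \<subseteq> G \<longrightarrow> g (F \<union> H) + g (F \<inter> H) \<le> g F + g H)"

text \<open>w \<in> P_{M'}: nonnegative on E' and w restricted to E_j lies in polymatroid P_j for all j in M'.
  (Values of w outside E' are irrelevant.)\<close>
definition in_P :: "(nat \<times> nat) set \<Rightarrow> (nat \<Rightarrow> (nat \<times> nat) set \<Rightarrow> real) \<Rightarrow> nat set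
                    \<Rightarrow> ((nat \<times> nat) \<Rightarrow> real) \<Rightarrow> bool" where
  "in_P E f M' w \<longleftrightarrow>
     (\<forall>e \<in> sub_edges E M'. 0 \<le> w e) \<and>
     (\<forall>j \<in> M'. \<forall>F. F \<subseteq> edges_at_seller E j \<longrightarrow> sum w F \<le> f j F)"

definition liquid_welfare ::
  "nat set \<Rightarrow> (nat \<times> nat) set \<Rightarrow> (nat \<Rightarrow> (nat \<times> nat) set \<Rightarrow> real) \<Rightarrow> (nat \<Rightarrow> real)
   \<Rightarrow> (nat \<Rightarrow> real) \<Rightarrow> nat set \<Rightarrow> (nat \<Rightarrow> real) \<Rightarrow> ((nat \<times> nat) \<Rightarrow> real) \<Rightarrow> real" where
  "liquid_welfare N0 E f v B M' \<sigma> w =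
     (\<Sum>i\<in>N0. min (v i * sum w (edges_at_buyer E i \<inter> sub_edges E M')) (B i))
     + (\<Sum>j\<in>M'. \<sigma> j * (f j (edges_at_seller E j) - sum w (edges_at_seller E j)))"

text \<open>LW^{OPT(M',sigma)}: the optimum (maximum, which is attained) of liquid welfare over P_{M'}.\<close>
definition LW_OPT ::
  "nat set \<Rightarrow> (nat \<times> nat) set \<Rightarrow> (nat \<Rightarrow> (nat \<times> nat) set \<Rightarrow> real) \<Rightarrow> (nat \<Rightarrow> real)
   \<Rightarrow> (nat \<Rightarrow> real) \<Rightarrow> nat set \<Rightarrow> (nat \<Rightarrow> real) \<Rightarrow> real" where
  "LW_OPT N0 E f v B M' \<sigma> = (SUP w \<in> {w. in_P E f M' w}. liquid_welfare N0 E f v B M' \<sigma> w)"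

end

theory Submission
  imports Defs
begin

lemma min_split_aux:
  fixes x y b :: real
  assumes "x \<ge> 0" "y \<ge> 0" "b \<ge> 0"
  shows "min (x + y) b \<le> min x b + min y b"
  using assms by (auto simp: min_def)

lemma zero_in_P:
  assumes f_ok: "\<forall>j\<in>M. mono_submod_on (edges_at_seller E j) (f j)" and S: "S \<subseteq> M"
  shows "in_P E f S (\<lambda>_. 0)"
  using f_ok S unfolding in_P_def mono_submod_on_def by auto

lemma lw_le:
  assumes f_ok: "\<forall>j\<in>M. mono_submod_on (edges_at_seller E j) (f j)"
    and Sm: "S \<subseteq> M" and \<sigma>: "\<forall>j\<in>S. \<sigma> j \<ge> 0" and w: "in_P E f S w"
  shows "liquid_welfare N0 E f v B S \<sigma> w
     \<le> (\<Sum>i\<in>N0. B i) + (\<Sum>j\<in>S. \<sigma> j * f j (edges_at_seller E j))"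
proof -
  have 1: "(\<Sum>i\<in>N0. min (v i * sum w (edges_at_buyer E i \<inter> sub_edges E S)) (B i)) \<le> (\<Sum>i\<in>N0. B i)"
    by (rule sum_mono) simp
  have 2: "\<sigma> j * (f j (edges_at_seller E j) - sum w (edges_at_seller E j)) \<le> \<sigma> j * f j (edges_at_seller E j)"
    if j: "j \<in> S" for j
  proof -
    have "edges_at_seller E j \<subseteq> sub_edges E S" using j
      by (auto simp: edges_at_seller_def sub_edges_def)
    then have "sum w (edges_at_seller E j) \<ge> 0" using w unfolding in_P_def
      by (intro sum_nonneg) auto
    then show ?thesis using \<sigma> j by (simp add: mult_left_mono)
  qed
  have "(\<Sum>j\<in>S. \<sigma> j * (f j (edges_at_seller E j) - sum w (edges_at_seller E j))) \<le> (\<Sum>j\<in>S. \<sigma> j * f j (edges_at_seller E j))"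
    using 2 by (rule sum_mono)
  with 1 show ?thesis unfolding liquid_welfare_def by linarith
qed

lemma split_le:
  assumes fin: "finite E" and finM: "finite M"
    and f_ok: "\<forall>j\<in>M. mono_submod_on (edges_at_seller E j) (f j)"
    and v_pos: "\<forall>i\<in>N0. v i > 0" and B_nonneg: "\<forall>i\<in>N0. B i \<ge> 0"
    and SM: "S \<subseteq> M" and TM: "T \<subseteq> M" and MST: "M \<subseteq> S \<union> T"
    and \<tau>1: "\<forall>j\<in>T - S. \<rho> j \<le> \<tau> j" and \<tau>2: "\<forall>j\<in>T. \<tau> j \<ge> 0"
    and w: "in_P E f M w"
  shows "liquid_welfare N0 E f v B M \<rho> w
     \<le> liquid_welfare N0 E f v B S \<rho> (\<lambda>e. if snd e \<in> S then w e else 0)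
      + liquid_welfare N0 E f v B T \<tau> (\<lambda>e. if snd e \<in> T - S then w e else 0)"
proof -
  define wS where "wS = (\<lambda>e. if snd e \<in> S then w e else 0)"
  define wT where "wT = (\<lambda>e. if snd e \<in> T - S then w e else 0)"
  have wnn: "\<forall>e\<in>sub_edges E M. 0 \<le> w e" and wle: "\<forall>j\<in>M. \<forall>F. F \<subseteq> edges_at_seller E j \<longrightarrow> sum w F \<le> f j F"
    using w unfolding in_P_def by auto
  have buyer: "min (v i * sum w (edges_at_buyer E i \<inter> sub_edges E M)) (B i)
     \<le> min (v i * sum wS (edges_at_buyer E i \<inter> sub_edges E S)) (B i)
      + min (v i * sum wT (edges_at_buyer E i \<inter> sub_edges E T)) (B i)" if i: "i \<in> N0" for i
  proof -
    let ?X = "edges_at_buyer E i \<inter> sub_edges E M"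
    have finX: "finite ?X" using fin by (auto simp: sub_edges_def)
    have "sum w ?X = sum (\<lambda>e. wS e + wT e) ?X"
      using MST by (intro sum.cong) (auto simp: wS_def wT_def sub_edges_def)
    also have "\<dots> = sum wS ?X + sum wT ?X" by (rule sum.distrib)
    finally have e1: "sum w ?X = sum wS ?X + sum wT ?X" .
    have e2: "sum wS ?X = sum wS (edges_at_buyer E i \<inter> sub_edges E S)"
      using SM by (intro sum.mono_neutral_right finX) (auto simp: wS_def sub_edges_def)
    have e3: "sum wT ?X = sum wT (edges_at_buyer E i \<inter> sub_edges E T)"
      using TM by (intro sum.mono_neutral_right finX) (auto simp: wT_def sub_edges_def)
    have n1: "sum wS ?X \<ge> 0" using wnn by (intro sum_nonneg) (auto simp: wS_def)
    have n2: "sum wT ?X \<ge> 0" using wnn by (intro sum_nonneg) (auto simp: wT_def)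
    have vi: "v i > 0" "B i \<ge> 0" using v_pos B_nonneg i by auto
    have "min (v i * sum w ?X) (B i) = min (v i * sum wS ?X + v i * sum wT ?X) (B i)"
      using e1 by (simp add: distrib_left)
    also have "\<dots> \<le> min (v i * sum wS ?X) (B i) + min (v i * sum wT ?X) (B i)"
      using n1 n2 vi by (intro min_split_aux) auto
    finally show ?thesis using e2 e3 by simp
  qed
  let ?g = "\<lambda>\<sigma> u j. \<sigma> j * (f j (edges_at_seller E j) - sum u (edges_at_seller E j))"
  have MS: "M = S \<union> (T - S)" using SM TM MST by auto
  have s1: "sum (?g \<rho> w) M = sum (?g \<rho> w) S + sum (?g \<rho> w) (T - S)"
  proof -
    have fS: "finite S" "finite (T - S)" using finM SM TM finite_subset by (auto intro: finite_subset)
    have "sum (?g \<rho> w) M = sum (?g \<rho> w) (S \<union> (T - S))" by (rule arg_cong[OF MS])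
    also have "\<dots> = sum (?g \<rho> w) S + sum (?g \<rho> w) (T - S)"
      by (rule sum.union_disjoint[OF fS]) blast
    finally show ?thesis .
  qed
  have s2: "sum (?g \<rho> w) S = sum (?g \<rho> wS) S"
  proof (rule sum.cong)
    fix j assume "j \<in> S"
    then have "sum w (edges_at_seller E j) = sum wS (edges_at_seller E j)"
      by (intro sum.cong) (auto simp: wS_def edges_at_seller_def)
    then show "?g \<rho> w j = ?g \<rho> wS j" by simp
  qed simp
  have s3: "sum (?g \<rho> w) (T - S) \<le> sum (?g \<tau> wT) (T - S)"
  proof (rule sum_mono)
    fix j assume j: "j \<in> T - S"
    then have eq: "sum w (edges_at_seller E j) = sum wT (edges_at_seller E j)"
      by (intro sum.cong) (auto simp: wT_def edges_at_seller_def)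
    have "j \<in> M" using j TM by auto
    then have "sum w (edges_at_seller E j) \<le> f j (edges_at_seller E j)" using wle by auto
    then show "?g \<rho> w j \<le> ?g \<tau> wT j" using eq \<tau>1 j by (simp add: mult_right_mono)
  qed
  have s4: "sum (?g \<tau> wT) (T - S) \<le> sum (?g \<tau> wT) T"
  proof (rule sum_mono2)
    show "finite T" using finM TM finite_subset by blast
  next
    fix j assume j: "j \<in> T - (T - S)"
    then have "sum wT (edges_at_seller E j) = 0"
      by (intro sum.neutral) (auto simp: wT_def edges_at_seller_def)
    moreover have "f j (edges_at_seller E j) \<ge> 0" using f_ok j TM
      unfolding mono_submod_on_def by auto
    ultimately show "0 \<le> ?g \<tau> wT j" using \<tau>2 j by simp
  qed auto
  have b: "(\<Sum>i\<in>N0. min (v i * sum w (edges_at_buyer E i \<inter> sub_edges E M)) (B i))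
     \<le> (\<Sum>i\<in>N0. min (v i * sum wS (edges_at_buyer E i \<inter> sub_edges E S)) (B i))
      + (\<Sum>i\<in>N0. min (v i * sum wT (edges_at_buyer E i \<inter> sub_edges E T)) (B i))"
    unfolding sum.distrib[symmetric] using buyer by (rule sum_mono)
  show ?thesis unfolding liquid_welfare_def wS_def[symmetric] wT_def[symmetric]
    using b s1 s2 s3 s4 by linarith
qed

lemma restrict_in_P:
  assumes f_ok: "\<forall>j\<in>M. mono_submod_on (edges_at_seller E j) (f j)"
    and w: "in_P E f M w" and SM: "S \<subseteq> M" and RS: "R \<subseteq> S"
  shows "in_P E f S (\<lambda>e. if snd e \<in> R then w e else 0)"
  unfolding in_P_def
proof (intro conjI ballI allI impI)
  fix e assume "e \<in> sub_edges E S"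
  then show "0 \<le> (if snd e \<in> R then w e else 0)"
    using w SM RS unfolding in_P_def sub_edges_def by (cases e) auto
next
  fix j F assume j: "j \<in> S" and F: "F \<subseteq> edges_at_seller E j"
  show "sum (\<lambda>e. if snd e \<in> R then w e else 0) F \<le> f j F"
  proof (cases "j \<in> R")
    case True
    then have "sum (\<lambda>e. if snd e \<in> R then w e else 0) F = sum w F"
      using F by (intro sum.cong) (auto simp: edges_at_seller_def)
    then show ?thesis using w j F SM unfolding in_P_def by auto
  next
    case False
    then have "sum (\<lambda>e. if snd e \<in> R then w e else 0) F = 0"
      using F by (intro sum.neutral) (auto simp: edges_at_seller_def)
    then show ?thesis using f_ok j F SM unfolding mono_submod_on_def by auto
  qed
qed

lemma opt_ge:
  assumes f_ok: "\<forall>j\<in>M. mono_submod_on (edges_at_seller E j) (f j)"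
    and Sm: "S \<subseteq> M" and \<sigma>: "\<forall>j\<in>S. \<sigma> j \<ge> 0" and w: "in_P E f S w"
  shows "liquid_welfare N0 E f v B S \<sigma> w \<le> LW_OPT N0 E f v B S \<sigma>"
  unfolding LW_OPT_def
proof (rule cSUP_upper)
  show "w \<in> {w. in_P E f S w}" using w by simp
  show "bdd_above (liquid_welfare N0 E f v B S \<sigma> ` {w. in_P E f S w})"
    using lw_le[OF f_ok Sm \<sigma>] by (intro bdd_aboveI) blast
qed

lemma opt_le:
  assumes f_ok: "\<forall>j\<in>M. mono_submod_on (edges_at_seller E j) (f j)"
    and h: "\<And>w. in_P E f M w \<Longrightarrow> liquid_welfare N0 E f v B M \<sigma> w \<le> L"
  shows "LW_OPT N0 E f v B M \<sigma> \<le> L"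
  unfolding LW_OPT_def
proof (rule cSUP_least)
  show "{w. in_P E f M w} \<noteq> {}" using zero_in_P[OF f_ok order_refl] by blast
qed (use h in auto)

theorem lemma4p7:
  fixes n m :: nat
    and E :: "(nat \<times> nat) set"
    and f :: "nat \<Rightarrow> (nat \<times> nat) set \<Rightarrow> real"
    and v B :: "nat \<Rightarrow> real"
    and \<rho>a \<rho>b :: "nat \<Rightarrow> real"
  assumes E_sub: "E \<subseteq> {1..n} \<times> {1..m}"
    and f_ok: "\<forall>j \<in> {1..m}. mono_submod_on (edges_at_seller E j) (f j)"
    and v_pos: "\<forall>i \<in> {1..n}. v i > 0"
    and B_nonneg: "\<forall>i \<in> {1..n}. B i \<ge> 0"
    and \<rho>a_pos: "\<forall>j \<in> {1..m}. \<rho>a j > 0"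
    and \<rho>b_pos: "\<forall>j \<in> {1..m}. \<rho>b j > 0"
  shows "LW_OPT {1..n} E f v B {j \<in> {1..m}. \<rho>a j \<ge> \<rho>b j} \<rho>a
         + LW_OPT {1..n} E f v B {j \<in> {1..m}. \<rho>a j \<le> \<rho>b j} \<rho>b
         \<ge> (LW_OPT {1..n} E f v B {1..m} \<rho>a + LW_OPT {1..n} E f v B {1..m} \<rho>b) / 2"
proof -
  let ?A = "{j \<in> {1..m}. \<rho>a j \<ge> \<rho>b j}"
  let ?B = "{j \<in> {1..m}. \<rho>a j \<le> \<rho>b j}"
  let ?L = "LW_OPT {1..n} E f v B ?A \<rho>a + LW_OPT {1..n} E f v B ?B \<rho>b"
  have fin: "finite E" using E_sub finite_subset by blast
  have fA: "\<forall>j\<in>?A. \<rho>a j \<ge> 0" using \<rho>a_pos less_imp_le by blast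
  have fB: "\<forall>j\<in>?B. \<rho>b j \<ge> 0" using \<rho>b_pos less_imp_le by blast
  have "LW_OPT {1..n} E f v B {1..m} \<rho>a \<le> ?L"
  proof (rule opt_le[OF f_ok])
    fix w assume w: "in_P E f {1..m} w"
    have "liquid_welfare {1..n} E f v B {1..m} \<rho>a w
     \<le> liquid_welfare {1..n} E f v B ?A \<rho>a (\<lambda>e. if snd e \<in> ?A then w e else 0)
      + liquid_welfare {1..n} E f v B ?B \<rho>b (\<lambda>e. if snd e \<in> ?B - ?A then w e else 0)"
      by (rule split_le[OF fin _ f_ok v_pos B_nonneg _ _ _ _ _ w]) (use fB in auto)
    also have "\<dots> \<le> ?L"
    proof (rule add_mono)
      show "liquid_welfare {1..n} E f v B ?A \<rho>a (\<lambda>e. if snd e \<in> ?A then w e else 0)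
          \<le> LW_OPT {1..n} E f v B ?A \<rho>a"
        by (intro opt_ge[OF f_ok _ fA] restrict_in_P[OF f_ok w]) auto
      show "liquid_welfare {1..n} E f v B ?B \<rho>b (\<lambda>e. if snd e \<in> ?B - ?A then w e else 0)
          \<le> LW_OPT {1..n} E f v B ?B \<rho>b"
        by (intro opt_ge[OF f_ok _ fB] restrict_in_P[OF f_ok w]) auto
    qed
    finally show "liquid_welfare {1..n} E f v B {1..m} \<rho>a w \<le> ?L" .
  qed
  moreover have "LW_OPT {1..n} E f v B {1..m} \<rho>b \<le> ?L"
  proof (rule opt_le[OF f_ok])
    fix w assume w: "in_P E f {1..m} w"
    have "liquid_welfare {1..n} E f v B {1..m} \<rho>b w
     \<le> liquid_welfare {1..n} E f v B ?B \<rho>b (\<lambda>e. if snd e \<in> ?B then w e else 0)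
      + liquid_welfare {1..n} E f v B ?A \<rho>a (\<lambda>e. if snd e \<in> ?A - ?B then w e else 0)"
      by (rule split_le[OF fin _ f_ok v_pos B_nonneg _ _ _ _ _ w]) (use fA in auto)
    also have "\<dots> \<le> ?L"
    proof -
      have "liquid_welfare {1..n} E f v B ?A \<rho>a (\<lambda>e. if snd e \<in> ?A - ?B then w e else 0)
          \<le> LW_OPT {1..n} E f v B ?A \<rho>a"
        by (intro opt_ge[OF f_ok _ fA] restrict_in_P[OF f_ok w]) auto
      moreover have "liquid_welfare {1..n} E f v B ?B \<rho>b (\<lambda>e. if snd e \<in> ?B then w e else 0)
          \<le> LW_OPT {1..n} E f v B ?B \<rho>b"
        by (intro opt_ge[OF f_ok _ fB] restrict_in_P[OF f_ok w]) auto
      ultimately show ?thesis by linarith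
    qed
    finally show "liquid_welfare {1..n} E f v B {1..m} \<rho>b w \<le> ?L" .
  qed
  ultimately show ?thesis by (simp add: field_simps)
qed

end
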